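(* Let $E$ be a Banach space and let $C\subset E$. Suppose either (a) $T:C\to C$ is firmly nonexpansive, or (b) $C$ is convex and $T:C\to C$ is averaged nonexpansive. If there exists a nonempty bounded set $D\subset C$ such that $T(D)=D$, then every point of $D$ is a fixed point of $T$, i.e. $D\subset \mathrm{Fix}\,T=\{x\in C: Tx=x\}$. In particular, $\mathrm{Fix}\,T$ is nonempty.
   Context: A mapping $T:C\to C$ is firmly nonexpansive if $\|Tx-Ty\|\le \|\alpha(x-y)+(1-\alpha)(Tx-Ty)\|$ for all $x,y\in C$ and all $\alpha\in(0,1)$. For convex $C$, a mapping $T:C\to C$ is averaged nonexpansive if $T=\alpha I+(1-\alpha)S$ for some $\alpha\in(0,1)$ and some nonexpansive $S:C\to C$ (i.e. $\|Sx-Sy\|\le\|x-y\|$ for all $x,y\in C$), where $I$ is the identity. *)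

theory Defs
  imports "HOL-Analysis.Analysis"
begin

definition maps_into :: "('a \<Rightarrow> 'a) \<Rightarrow> 'a set \<Rightarrow> bool" where
  "maps_into T C \<longleftrightarrow> (\<forall>x\<in>C. T x \<in> C)"

definition nonexpansive_on :: "'a::real_normed_vector set \<Rightarrow> ('a \<Rightarrow> 'a) \<Rightarrow> bool" where
  "nonexpansive_on C S \<longleftrightarrow> maps_into S C \<and>
     (\<forall>x\<in>C. \<forall>y\<in>C. norm (S x - S y) \<le> norm (x - y))"

definition firmly_nonexpansive_on :: "'a::real_normed_vector set \<Rightarrow> ('a \<Rightarrow> 'a) \<Rightarrow> bool" where
  "firmly_nonexpansive_on C T \<longleftrightarrow> maps_into T C \<and>
     (\<forall>x\<in>C. \<forall>y\<in>C. \<forall>\<alpha>::real. 0 < \<alpha> \<and> \<alpha> < 1 \<longrightarrow>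
        norm (T x - T y) \<le> norm (\<alpha> *\<^sub>R (x - y) + (1 - \<alpha>) *\<^sub>R (T x - T y)))"

definition averaged_nonexpansive_on :: "'a::real_normed_vector set \<Rightarrow> ('a \<Rightarrow> 'a) \<Rightarrow> bool" where
  "averaged_nonexpansive_on C T \<longleftrightarrow> maps_into T C \<and>
     (\<exists>\<alpha>::real. \<exists>S. 0 < \<alpha> \<and> \<alpha> < 1 \<and> nonexpansive_on C S \<and>
        (\<forall>x\<in>C. T x = \<alpha> *\<^sub>R x + (1 - \<alpha>) *\<^sub>R S x))"

definition Fix :: "'a set \<Rightarrow> ('a \<Rightarrow> 'a) \<Rightarrow> 'a set" where
  "Fix C T = {x\<in>C. T x = x}"

end

theory Submission
  imports Defs
begin

lemma maps_into_funpow: "maps_into T C \<Longrightarrow> x \<in> C \<Longrightarrow> (T^^n) x \<in> C"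
  by (induction n) (auto simp: maps_into_def)

lemma funpow_image: "T ` D = D \<Longrightarrow> (T^^n) ` D = D"
  proof (induction n)
  case (Suc n) then show ?case by (simp add: image_image[symmetric])
qed simp

lemma funpow_shift: "(f^^n) (f x) = (f^^Suc n) x"
  by (simp add: funpow_swap1)

lemma ne_disp_mono:
  assumes "nonexpansive_on C T" "x\<in>C"
  shows "norm ((T^^k) x - T ((T^^k) x)) \<le> norm (x - T x)"
proof (induction k)
  case 0 then show ?case by simp
next
  case (Suc k)
  have m: "maps_into T C" using assms(1) unfolding nonexpansive_on_def by blast
  have y: "(T^^k) x \<in> C" using maps_into_funpow[OF m assms(2)] .
  have "T ((T^^k) x) \<in> C" using m y unfolding maps_into_def by blast
  then have "norm (T ((T^^k) x) - T (T ((T^^k) x))) \<le> norm ((T^^k) x - T ((T^^k) x))"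
    using assms(1) y unfolding nonexpansive_on_def by (metis norm_minus_commute)
  then show ?case using Suc by simp
qed

lemma ne_disp_sum:
  assumes "nonexpansive_on C T" "x\<in>C"
  shows "norm (x - (T^^k) x) \<le> real k * norm (x - T x)"
proof (induction k)
  case 0 then show ?case by simp
next
  case (Suc k)
  have "norm (x - (T^^Suc k) x) \<le> norm (x - (T^^k) x) + norm ((T^^k) x - T ((T^^k) x))"
    using norm_triangle_ineq[of "x - (T^^k) x" "(T^^k) x - T ((T^^k) x)"] by simp
  also have "\<dots> \<le> real k * norm (x - T x) + norm (x - T x)"
    using Suc ne_disp_mono[OF assms] by (meson add_mono)
  finally show ?case by (simp add: algebra_simps)
qed

lemma firm_half:
  assumes "firmly_nonexpansive_on C T" "x\<in>C" "y\<in>C"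
  shows "norm (T x - T y) \<le> norm ((x - y) + (T x - T y)) / 2"
proof -
  have h: "\<forall>\<alpha>::real. 0 < \<alpha> \<and> \<alpha> < 1 \<longrightarrow> norm (T x - T y) \<le> norm (\<alpha> *\<^sub>R (x - y) + (1 - \<alpha>) *\<^sub>R (T x - T y))"
    using assms unfolding firmly_nonexpansive_on_def by blast
  have "0 < (1/2::real) \<and> (1/2::real) < 1" by simp
  then have "norm (T x - T y) \<le> norm ((1/2::real) *\<^sub>R (x - y) + (1 - 1/2) *\<^sub>R (T x - T y))"
    using h by blast
  also have "(1/2::real) *\<^sub>R (x - y) + (1 - 1/2) *\<^sub>R (T x - T y) = (1/2::real) *\<^sub>R ((x - y) + (T x - T y))"
    by (simp add: scaleR_add_right)
  finally show ?thesis by simp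
qed

lemma firm_ne:
  assumes "firmly_nonexpansive_on C T"
  shows "nonexpansive_on C T"
  unfolding nonexpansive_on_def
proof (intro conjI ballI)
  show "maps_into T C" using assms unfolding firmly_nonexpansive_on_def by blast
  fix x y assume "x\<in>C" "y\<in>C"
  then have "norm (T x - T y) \<le> norm ((x - y) + (T x - T y)) / 2" by (rule firm_half[OF assms])
  moreover have "norm ((x - y) + (T x - T y)) \<le> norm (x - y) + norm (T x - T y)" by (rule norm_triangle_ineq)
  ultimately show "norm (T x - T y) \<le> norm (x - y)" by linarith
qed

lemma firm_Q:
  assumes F: "firmly_nonexpansive_on C T"
  shows "\<forall>x\<in>C. norm (x - T x) \<le> L \<longrightarrow> L - \<epsilon> \<le> norm ((T^^Suc s) x - T ((T^^Suc s) x))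
     \<longrightarrow> real (Suc s) * L - 2^(Suc s) * \<epsilon> \<le> norm (x - (T^^Suc s) x)"
proof (induction s)
  have ne: "nonexpansive_on C T" using F firm_ne by blast
  have m: "maps_into T C" using F unfolding firmly_nonexpansive_on_def by blast
  case 0
  show ?case
  proof (intro ballI impI)
    fix x assume x: "x\<in>C" and h1: "norm (x - T x) \<le> L"
      and h2: "L - \<epsilon> \<le> norm ((T^^Suc 0) x - T ((T^^Suc 0) x))"
    have "norm (T x - T (T x)) \<le> norm (x - T x)"
      using ne_disp_mono[OF ne x, of 1] by simp
    then show "real (Suc 0) * L - 2^(Suc 0) * \<epsilon> \<le> norm (x - (T^^Suc 0) x)" using h1 h2 by simp
  qed
next
  have ne: "nonexpansive_on C T" using F firm_ne by blast
  have m: "maps_into T C" using F unfolding firmly_nonexpansive_on_def by blast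
  case (Suc s)
  show ?case
  proof (intro ballI impI)
    fix x assume x: "x\<in>C" and h1: "norm (x - T x) \<le> L"
      and h2: "L - \<epsilon> \<le> norm ((T^^Suc (Suc s)) x - T ((T^^Suc (Suc s)) x))"
    have Tx: "T x \<in> C" using m x unfolding maps_into_def by blast
    have a1: "norm (T x - T (T x)) \<le> L"
      using ne_disp_mono[OF ne x, of 1] h1 by simp
    have L0: "0 \<le> L" using h1 norm_ge_zero order_trans by blast
    have IH: "real (Suc s) * L - 2^(Suc s) * \<epsilon> \<le> norm (T x - (T^^Suc (Suc s)) x)"
      using Suc[rule_format, OF Tx a1] h2 funpow_shift[of "Suc s" T x] funpow_shift[of "Suc (Suc s)" T x]
      by simp
    define y where "y = (T^^Suc s) x"
    have y: "y \<in> C" unfolding y_def using maps_into_funpow[OF m x] .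
    have Ty: "T y = (T^^Suc (Suc s)) x" unfolding y_def by simp
    have mid: "norm (T x - T y) \<le> norm ((x - T y) + (T x - y)) / 2"
      using firm_half[OF F x y] by (simp add: algebra_simps)
    have tri: "norm ((x - T y) + (T x - y)) \<le> norm (x - T y) + norm (T x - y)" by (rule norm_triangle_ineq)
    have "norm (T x - y) \<le> real s * norm (T x - T (T x))"
      using ne_disp_sum[OF ne Tx, of s] funpow_shift[of s T x] unfolding y_def by simp
    also have "\<dots> \<le> real s * L" using a1 by (simp add: mult_left_mono)
    finally have b: "norm (T x - y) \<le> real s * L" .
    show "real (Suc (Suc s)) * L - 2^(Suc (Suc s)) * \<epsilon> \<le> norm (x - (T^^Suc (Suc s)) x)"
      using IH mid tri b Ty by (simp add: algebra_simps)
  qed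
qed

lemma avg_e_mono:
  assumes S: "nonexpansive_on C S" and Teq: "\<forall>y\<in>C. T y = a *\<^sub>R y + (1-a) *\<^sub>R S y"
    and mT: "maps_into T C" and a: "0 < a" "a < 1" and y: "y \<in> C"
  shows "norm (S (T y) - T y) \<le> norm (S y - y)"
proof -
  have Ty: "T y \<in> C" using mT y unfolding maps_into_def by blast
  have e1: "S y - T y = a *\<^sub>R (S y - y)" using Teq y by (simp add: algebra_simps)
  have e2: "T y - y = (1-a) *\<^sub>R (S y - y)" using Teq y by (simp add: algebra_simps)
  have "norm (S (T y) - T y) \<le> norm (S (T y) - S y) + norm (S y - T y)"
    using norm_triangle_ineq[of "S (T y) - S y" "S y - T y"] by simp
  also have "norm (S (T y) - S y) \<le> norm (T y - y)" using S Ty y unfolding nonexpansive_on_def by blast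
  also have "norm (T y - y) = (1-a) * norm (S y - y)" using e2 a by simp
  also have "norm (S y - T y) = a * norm (S y - y)" using e1 a by simp
  finally show ?thesis by (simp add: algebra_simps)
qed

lemma avg_e_antimono:
  assumes S: "nonexpansive_on C S" and Teq: "\<forall>y\<in>C. T y = a *\<^sub>R y + (1-a) *\<^sub>R S y"
    and mT: "maps_into T C" and a: "0 < a" "a < 1" and x: "x \<in> C"
  shows "norm (S ((T^^k) x) - (T^^k) x) \<le> norm (S x - x)"
proof (induction k)
  case (Suc k)
  have "(T^^k) x \<in> C" using maps_into_funpow[OF mT x] .
  from avg_e_mono[OF S Teq mT a this] Suc show ?case by simp
qed simp

lemma avg_ne:
  assumes S: "nonexpansive_on C S" and Teq: "\<forall>y\<in>C. T y = a *\<^sub>R y + (1-a) *\<^sub>R S y"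
    and mT: "maps_into T C" and a: "0 < a" "a < 1"
  shows "nonexpansive_on C T"
  unfolding nonexpansive_on_def
proof (intro conjI ballI)
  show "maps_into T C" by (rule mT)
  fix x y assume x: "x\<in>C" and y: "y\<in>C"
  have "T x - T y = a *\<^sub>R (x - y) + (1-a) *\<^sub>R (S x - S y)" using Teq x y by (simp add: algebra_simps)
  then have "norm (T x - T y) \<le> a * norm (x - y) + (1-a) * norm (S x - S y)"
    using norm_triangle_ineq[of "a *\<^sub>R (x - y)" "(1-a) *\<^sub>R (S x - S y)"] a by simp
  also have "\<dots> \<le> a * norm (x - y) + (1-a) * norm (x - y)"
    using S x y a unfolding nonexpansive_on_def by (simp add: mult_left_mono)
  finally show "norm (T x - T y) \<le> norm (x - y)" by (simp add: algebra_simps)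
qed

lemma ishikawa:
  assumes S: "nonexpansive_on C S" and Teq: "\<forall>y\<in>C. T y = a *\<^sub>R y + (1-a) *\<^sub>R S y"
    and mT: "maps_into T C" and a: "0 < a" "a < 1"
  shows "\<forall>x\<in>C. (1 + real n * (1-a)) * norm (S x - x) \<le> norm (S ((T^^n) x) - x)
           + ((real n + 1) / a^n) * (norm (S x - x) - norm (S ((T^^n) x) - (T^^n) x))"
proof (induction n)
  case 0 then show ?case by simp
next
  case (Suc n)
  have neT: "nonexpansive_on C T" using avg_ne[OF S Teq mT a] .
  show ?case
  proof
    fix x assume x: "x \<in> C"
    define K where "K = (\<lambda>m::nat. (real m + 1) / a^m)"
    define x1 where "x1 = T x"
    define zN where "zN = (T^^Suc n) x"
    define e0 where "e0 = norm (S x - x)"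
    define e1 where "e1 = norm (S x1 - x1)"
    define eN where "eN = norm (S zN - zN)"
    define X where "X = norm (S zN - x)"
    define Y where "Y = norm (S zN - x1)"
    have x1: "x1 \<in> C" using mT x unfolding maps_into_def x1_def by blast
    have zN: "zN \<in> C" unfolding zN_def using maps_into_funpow[OF mT x] .
    have zN': "zN = (T^^n) x1" unfolding zN_def x1_def by (simp add: funpow_shift)
    have IH: "(1 + real n * (1-a)) * e1 \<le> Y + K n * (e1 - eN)"
      using Suc x1 unfolding e1_def eN_def zN' Y_def K_def by blast
    have dec: "a *\<^sub>R (S zN - x) = (S zN - x1) - (1-a) *\<^sub>R (S zN - S x)"
      using Teq x unfolding x1_def by (simp add: algebra_simps)
    have "Y - norm ((1-a) *\<^sub>R (S zN - S x)) \<le> norm (a *\<^sub>R (S zN - x))"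
      unfolding dec Y_def by (rule norm_triangle_ineq2)
    then have aX: "Y - (1-a) * norm (S zN - S x) \<le> a * X" using a unfolding X_def by simp
    have n1: "norm (S zN - S x) \<le> norm (zN - x)" using S zN x unfolding nonexpansive_on_def by blast
    have dx: "x - T x = (1-a) *\<^sub>R (x - S x)" using Teq x by (simp add: algebra_simps)
    have "norm (zN - x) = norm (x - (T^^Suc n) x)" unfolding zN_def by (simp add: norm_minus_commute)
    also have "\<dots> \<le> real (Suc n) * norm (x - T x)" by (rule ne_disp_sum[OF neT x])
    also have "\<dots> = real (Suc n) * ((1-a) * e0)" unfolding dx e0_def using a by (simp add: norm_minus_commute)
    finally have n2: "norm (S zN - S x) \<le> real (Suc n) * ((1-a) * e0)" using n1 by linarith
    have m1: "eN \<le> e1" unfolding eN_def e1_def zN' using avg_e_antimono[OF S Teq mT a x1] .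
    have m2: "e1 \<le> e0" unfolding e0_def e1_def x1_def using avg_e_mono[OF S Teq mT a x] .
    define p where "p = e0 - e1"
    define q where "q = e1 - eN"
    have p: "p \<ge> 0" and q: "q \<ge> 0" using m1 m2 unfolding p_def q_def by auto
    have an: "a^n \<le> 1" "0 < a^n" using a by (auto simp: power_le_one)
    have aK: "a * K (Suc n) = (real n + 2) / a^n" unfolding K_def using a by (simp add: field_simps)
    have "1 + real n * (1-a) \<le> real n + 2" using a by (simp add: algebra_simps mult_left_le)
    also have "real n + 2 \<le> (real n + 2) / a^n" using an by (simp add: le_divide_eq)
    finally have hp: "(1 + real n * (1-a)) * p \<le> a * K (Suc n) * p" unfolding aK by (rule mult_right_mono[OF _ p])
    have "K n \<le> a * K (Suc n)" unfolding aK unfolding K_def using an by (intro divide_right_mono) auto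
    then have hq: "K n * q \<le> a * K (Suc n) * q" by (rule mult_right_mono[OF _ q])
    have n3: "(1-a) * norm (S zN - S x) \<le> (1-a) * (real (Suc n) * ((1-a) * e0))"
      using n2 a by (simp add: mult_left_mono)
    have "a * ((1 + real (Suc n) * (1-a)) * e0 - K (Suc n) * (e0 - eN))
          = (1 + real n * (1-a)) * (e0 - p) - (1-a) * (real (Suc n) * ((1-a) * e0))
            - (a * K (Suc n) * p + a * K (Suc n) * q) + (1 + real n * (1-a)) * p"
      unfolding p_def q_def by (simp add: algebra_simps)
    also have "\<dots> \<le> a * X" using IH aX n3 hp hq unfolding p_def q_def by (simp add: algebra_simps)
    finally have "a * ((1 + real (Suc n) * (1-a)) * e0 - K (Suc n) * (e0 - eN)) \<le> a * X" .
    then have "(1 + real (Suc n) * (1-a)) * e0 - K (Suc n) * (e0 - eN) \<le> X" using a by simp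
    then show "(1 + real (Suc n) * (1-a)) * norm (S x - x) \<le> norm (S ((T^^Suc n) x) - x)
           + ((real (Suc n) + 1) / a^(Suc n)) * (norm (S x - x) - norm (S ((T^^Suc n) x) - (T^^Suc n) x))"
      unfolding e0_def X_def eN_def zN_def K_def by simp
  qed
qed

theorem theorem3p3:
  fixes C D :: "'a::banach set" and T :: "'a \<Rightarrow> 'a"
  assumes "firmly_nonexpansive_on C T \<or> (convex C \<and> averaged_nonexpansive_on C T)"
    and "D \<subseteq> C" and "D \<noteq> {}" and "bounded D" and "T ` D = D"
  shows "D \<subseteq> Fix C T \<and> Fix C T \<noteq> {}"
proof -
  obtain B where B: "\<forall>x\<in>D. norm x \<le> B" using assms(4) bounded_iff by blast
  have B0: "0 \<le> B" using B assms(3) norm_ge_zero order_trans by blast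
  have TD: "\<forall>x\<in>D. T x \<in> D" using assms(5) by blast
  have mD: "maps_into T D" using TD unfolding maps_into_def by blast
  define f where "f = (\<lambda>x. norm (x - T x))"
  have fB: "\<forall>x\<in>D. f x \<le> 2 * B"
  proof
    fix x assume x: "x \<in> D"
    have "f x \<le> norm x + norm (T x)" unfolding f_def by (rule norm_triangle_ineq4)
    moreover have "norm x \<le> B" "norm (T x) \<le> B" using B x TD by auto
    ultimately show "f x \<le> 2 * B" by linarith
  qed
  have B2: "\<forall>w\<in>D. \<forall>n. norm (w - (T^^n) w) \<le> 2 * B"
  proof (intro ballI allI)
    fix w n assume w: "w \<in> D"
    have "(T^^n) w \<in> D" using maps_into_funpow[OF mD w] .
    moreover have "norm (w - (T^^n) w) \<le> norm w + norm ((T^^n) w)" by (rule norm_triangle_ineq4)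
    moreover have "norm w \<le> B" using B w by auto
    ultimately show "norm (w - (T^^n) w) \<le> 2 * B" using B by fastforce
  qed
  define L where "L = Sup (f ` D)"
  have bdd: "bdd_above (f ` D)" using fB by (auto intro: bdd_aboveI2)
  have fL: "\<forall>x\<in>D. f x \<le> L" unfolding L_def using bdd by (auto intro: cSup_upper)
  have approx: "\<And>e. e > 0 \<Longrightarrow> \<exists>x\<in>D. L - e < f x"
  proof -
    fix e :: real assume "e > 0"
    then have "L - e < Sup (f ` D)" unfolding L_def by simp
    then show "\<exists>x\<in>D. L - e < f x" using less_cSup_iff[of "f ` D"] bdd assms(3) by auto
  qed
  have bk: "\<And>x n. x \<in> D \<Longrightarrow> \<exists>w\<in>D. (T^^n) w = x"
    using funpow_image[OF assms(5)] by (metis imageE)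
  have main: "\<forall>x\<in>D. f x = 0"
  proof (rule ccontr)
    assume "\<not> (\<forall>x\<in>D. f x = 0)"
    then obtain x where x: "x \<in> D" "f x \<noteq> 0" by blast
    then have "f x > 0" unfolding f_def by simp
    then have L0: "L > 0" using fL x by fastforce
    from assms(1) show False
    proof
      assume F: "firmly_nonexpansive_on C T"
      have neT: "nonexpansive_on C T" using firm_ne[OF F] .
      obtain n where n: "2 * B / L < real n" using reals_Archimedean2 by blast
      then have nL: "2 * B < real n * L" using L0 by (simp add: divide_less_eq)
      define \<epsilon> where "\<epsilon> = L / 2^(Suc (Suc n))"
      have e0: "\<epsilon> > 0" unfolding \<epsilon>_def using L0 by simp
      obtain x0 where x0: "x0 \<in> D" "L - \<epsilon> < f x0" using approx[OF e0] by blast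
      obtain w where w: "w \<in> D" "(T^^Suc n) w = x0" using bk[OF x0(1)] by blast
      have wC: "w \<in> C" using w assms(2) by blast
      have "real (Suc n) * L - 2^(Suc n) * \<epsilon> \<le> norm (w - (T^^Suc n) w)"
        using firm_Q[OF F, rule_format, OF wC] fL w x0 unfolding f_def by fastforce
      moreover have "2^(Suc n) * \<epsilon> = L / 2" unfolding \<epsilon>_def by simp
      moreover have "norm (w - (T^^Suc n) w) \<le> 2 * B" using B2 w by blast
      moreover have "real (Suc n) * L = real n * L + L" by (simp add: algebra_simps)
      ultimately show False using nL L0 by linarith
    next
      assume "convex C \<and> averaged_nonexpansive_on C T"
      then obtain a S where mT: "maps_into T C" and a: "0 < a" "a < 1" and S: "nonexpansive_on C S"
        and Teq: "\<forall>y\<in>C. T y = a *\<^sub>R y + (1 - a) *\<^sub>R S y"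
        unfolding averaged_nonexpansive_on_def by blast
      have neT: "nonexpansive_on C T" using avg_ne[OF S Teq mT a] .
      define l where "l = 1 - a"
      have l: "0 < l" "l < 1" unfolding l_def using a by auto
      obtain n where n: "2 * B / (l * L) < real n" using reals_Archimedean2 by blast
      then have nL: "2 * B < real n * l * L" using L0 l by (simp add: divide_less_eq)
      define K where "K = (real n + 1) / a^n"
      have K0: "K \<ge> 0" unfolding K_def using a by simp
      define \<epsilon> where "\<epsilon> = L / (2 * ((real n + 1) + K))"
      have e0: "\<epsilon> > 0" unfolding \<epsilon>_def using L0 K0 by simp
      have eK: "((real n + 1) + K) * \<epsilon> = L / 2" unfolding \<epsilon>_def using K0 by (simp add: field_simps)
      obtain x0 where x0: "x0 \<in> D" "L - \<epsilon> < f x0" using approx[OF e0] by blast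
      obtain w where w: "w \<in> D" "(T^^n) w = x0" using bk[OF x0(1)] by blast
      have wC: "w \<in> C" and x0C: "x0 \<in> C" using w x0 assms(2) by auto
      have fS: "\<And>y. y \<in> C \<Longrightarrow> f y = l * norm (S y - y)"
      proof -
        fix y assume "y \<in> C"
        then have "y - T y = l *\<^sub>R (y - S y)" using Teq unfolding l_def by (simp add: algebra_simps)
        then show "f y = l * norm (S y - y)" unfolding f_def using l by (simp add: norm_minus_commute)
      qed
      have I: "(1 + real n * l) * norm (S w - w) \<le> norm (S x0 - w) + K * (norm (S w - w) - norm (S x0 - x0))"
        using ishikawa[OF S Teq mT a, rule_format, OF wC, of n] w(2) unfolding K_def l_def by simp
      then have "l * ((1 + real n * l) * norm (S w - w)) \<le> l * (norm (S x0 - w) + K * (norm (S w - w) - norm (S x0 - x0)))"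
        using l by (simp add: mult_left_mono)
      then have I2: "(1 + real n * l) * f w \<le> l * norm (S x0 - w) + K * (f w - f x0)"
        using fS[OF wC] fS[OF x0C] by (simp add: algebra_simps)
      have "l *\<^sub>R (S x0 - w) = T x0 - a *\<^sub>R x0 - l *\<^sub>R w" using Teq x0C unfolding l_def by (simp add: algebra_simps)
      then have "l * norm (S x0 - w) = norm (T x0 - a *\<^sub>R x0 - l *\<^sub>R w)" using l by (metis abs_of_pos norm_scaleR)
      also have "\<dots> \<le> norm (T x0) + a * norm x0 + l * norm w"
        using a l by (smt (verit, best) norm_scaleR norm_triangle_ineq4 abs_of_pos)
      also have "\<dots> \<le> B + a * B + l * B"
        using B TD x0 w a l by (intro add_mono mult_left_mono) auto
      also have "\<dots> = 2 * B" unfolding l_def by (simp add: algebra_simps)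
      finally have SB: "l * norm (S x0 - w) \<le> 2 * B" .
      have fwx: "f x0 \<le> f w" using ne_disp_mono[OF neT wC, of n] w(2) unfolding f_def by simp
      have fw: "f w \<le> L" using fL w by blast
      have d: "f w - f x0 \<le> \<epsilon>" using fw x0 by linarith
      have "(1 + real n * l) * (L - \<epsilon>) \<le> (1 + real n * l) * f w"
        using fwx x0 l by (intro mult_left_mono) auto
      also have "\<dots> \<le> 2 * B + K * \<epsilon>" using I2 SB mult_left_mono[OF d K0] by linarith
      finally have A: "(1 + real n * l) * (L - \<epsilon>) \<le> 2 * B + K * \<epsilon>" .
      have "(1 + real n * l) * \<epsilon> \<le> (real n + 1) * \<epsilon>"
        using l e0 by (intro mult_right_mono) (auto simp: mult_left_le)
      then have "(1 + real n * l) * L \<le> 2 * B + ((real n + 1) + K) * \<epsilon>"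
        using A by (simp add: algebra_simps)
      then show False using eK nL L0 by (simp add: algebra_simps)
    qed
  qed
  have "D \<subseteq> Fix C T"
  proof
    fix x assume x: "x \<in> D"
    then have "f x = 0" using main by blast
    then show "x \<in> Fix C T" using x assms(2) unfolding Fix_def f_def by auto
  qed
  then show ?thesis using assms(3) by blast
qed

end
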